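(* Let $n$ be any positive integer. There exists a 1-layer transformer, with a suitable position embedding, that performs function evaluation for domain $[n]$ in the "consecutive positions, ordered keys" presentation. That is, for every function $f:[n]\to[n]$ and every target key $i^*\in[n]$, on the input sequence $0,f(0),1,f(1),\dots,n-1,f(n-1),i^*$ of length $2n+1$ (position $2i$ holds $i$, position $2i+1$ holds $f(i)$, position $2n$ holds $i^*$), it outputs $f(i^* )$. The transformer uses leftmost hard attention, one attention head, embedding dimension $4$, $O(\log n)$ bits of precision, no residual connections, and no MLP layer.
   Context: Notation: $[n]=\{0,1,\dots,n-1\}$. Transformer model (encoder-only, no masking, no layer normalization). A transformer of embedding dimension $d$ consists of three parts. - An input embedding maps an input sequence $x_0,\dots,x_{L-1}$ to vectors $\mathbf{e}(x_i)=\mathbf{w}(x_i)+\mathbf{p}(i)\in\mathbb{R}^d$. Here $\mathbf{w}$ is the token embedding and $\mathbf{p}$ is the position embedding, which may be chosen freely. - A sequence of length-preserving layers follows. - An output map comes last. Given an unembedding matrix $\mathbf{U}\in\mathbb{R}^{n\times d}$, the output is the index $i\in[n]$ maximizing $(\mathbf{U}\mathbf{Y}[L-1])_i$, where $\mathbf{Y}$ is the final layer's output sequence. A single-head attention layer has matrices $\mathbf{W}^Q,\mathbf{W}^K\in\mathbb{R}^{d_{hid}\times d}$ and $\mathbf{W}^V\in\mathbb{R}^{d\times d}$. It computes the scores $s[i,j]=(\mathbf{W}^Q\mathbf{X}[i])\cdot(\mathbf{W}^K\mathbf{X}[j])/\sqrt{d_{hid}}$, and outputs $\mathbf{Y}[i]=\sum_j\alpha[i,j]\mathbf{W}^V\mathbf{X}[j]$.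 - In leftmost hard attention, $\alpha[i,j]=1$ for the smallest $j$ maximizing $s[i,j]$, and $\alpha[i,j]=0$ otherwise. - With residuals the output is $\mathbf{X}[i]+\sum_j\alpha[i,j]\mathbf{W}^V\mathbf{X}[j]$. An MLP layer applies a 2-layer ReLU network position-wise. A $k$-layer transformer has $k$ attention layers and any number of MLP layers. *)

theory Defs
  imports "HOL-Analysis.Analysis"
begin

text \<open>W^Q, W^K are d_hid x 4 matrices given by their rows (row r, for r < dh);
  W^V is a 4 x 4 matrix; the unembedding U is an n x 4 matrix given by rows.\<close>

definition att_score ::
  "nat \<Rightarrow> (nat \<Rightarrow> real^4) \<Rightarrow> (nat \<Rightarrow> real^4) \<Rightarrow> real^4 \<Rightarrow> real^4 \<Rightarrow> real" where
  "att_score dh WQ WK x y =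
     (\<Sum>r<dh. (WQ r \<bullet> x) * (WK r \<bullet> y)) / sqrt (real dh)"

definition hard_attn_layer ::
  "nat \<Rightarrow> (nat \<Rightarrow> real^4) \<Rightarrow> (nat \<Rightarrow> real^4) \<Rightarrow> real^4^4 \<Rightarrow> (nat \<Rightarrow> real^4)
     \<Rightarrow> nat \<Rightarrow> nat \<Rightarrow> real^4" where
  "hard_attn_layer dh WQ WK WV X L i =
     WV *v X (LEAST j. j < L \<and>
       (\<forall>k<L. att_score dh WQ WK (X i) (X k) \<le> att_score dh WQ WK (X i) (X j)))"

definition tf1_outputs ::
  "nat \<Rightarrow> (nat \<Rightarrow> real^4) \<Rightarrow> (nat \<Rightarrow> real^4) \<Rightarrow> nat \<Rightarrow> (nat \<Rightarrow> real^4) \<Rightarrow> (nat \<Rightarrow> real^4)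
     \<Rightarrow> real^4^4 \<Rightarrow> (nat \<Rightarrow> real^4) \<Rightarrow> nat list \<Rightarrow> nat \<Rightarrow> bool" where
  "tf1_outputs n w p dh WQ WK WV U xs out \<longleftrightarrow>
     (let L = length xs;
          X = (\<lambda>i. w (xs ! i) + p i);
          y = hard_attn_layer dh WQ WK WV X L (L - 1)
      in out < n \<and> (\<forall>k<n. k \<noteq> out \<longrightarrow> U k \<bullet> y < U out \<bullet> y))"

definition fe_input :: "nat \<Rightarrow> (nat \<Rightarrow> nat) \<Rightarrow> nat \<Rightarrow> nat list" where
  "fe_input n f istar = concat (map (\<lambda>i. [i, f i]) [0..<n]) @ [istar]"

text \<open>Precision: all entries are integers of absolute value at most B.\<close>
definition int_vec_bounded :: "real \<Rightarrow> real^4 \<Rightarrow> bool" where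
  "int_vec_bounded B v \<longleftrightarrow> (\<forall>k. v $ k \<in> \<int> \<and> \<bar>v $ k\<bar> \<le> B)"

end

theory Submission
  imports Defs
begin

definition mk4 :: "real \<Rightarrow> real \<Rightarrow> real \<Rightarrow> real \<Rightarrow> real^4" where
  "mk4 a b c d = (\<chi> k. if k = 1 then a else if k = 2 then b else if k = 3 then c else d)"

lemma mk4_nth[simp]: "mk4 a b c d $ 1 = a" "mk4 a b c d $ 2 = b" "mk4 a b c d $ 3 = c" "mk4 a b c d $ 4 = d"
  by (simp_all add: mk4_def)

lemma inner4: "(x::real^4) \<bullet> y = x$1*y$1 + x$2*y$2 + x$3*y$3 + x$4*y$4"
  by (simp add: inner_vec_def sum_4)

lemma mv4: "((A::real^4^4) *v x) $ i = A$i$1*x$1 + A$i$2*x$2 + A$i$3*x$3 + A$i$4*x$4"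
  by (simp add: matrix_vector_mult_def sum_4)

lemma ivb_mk4: "int_vec_bounded B (mk4 a b c d) \<longleftrightarrow>
   a \<in> \<int> \<and> b \<in> \<int> \<and> c \<in> \<int> \<and> d \<in> \<int> \<and> \<bar>a\<bar> \<le> B \<and> \<bar>b\<bar> \<le> B \<and> \<bar>c\<bar> \<le> B \<and> \<bar>d\<bar> \<le> B"
  unfolding int_vec_bounded_def forall_4 by auto

lemma fe_len: "length (concat (map (\<lambda>i. [i, f i]) [0..<n])) = 2*n"
  by (induction n) auto

lemma fe_nth: "k < 2*n \<Longrightarrow> concat (map (\<lambda>i. [i, f i]) [0..<n]) ! k = (if even k then k div 2 else f (k div 2))"
proof (induction n arbitrary: k)
  case 0 then show ?case by simp
next
  case (Suc n)
  show ?case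
  proof (cases "k < 2*n")
    case True then show ?thesis using Suc by (simp add: nth_append fe_len)
  next
    case False
    then have "k = 2*n \<or> k = 2*n+1" using Suc.prems by auto
    then show ?thesis by (auto simp: nth_append fe_len)
  qed
qed


definition pe :: "nat \<Rightarrow> nat \<Rightarrow> real^4" where
  "pe n k = mk4 0 1 (if odd k then real (k div 2) else 0)
               (if odd k then - ((real (k div 2))^2) else - (real n^2 + 1))"
definition we :: "nat \<Rightarrow> real^4" where "we x = mk4 (real x) 0 0 0"
definition WQ :: "nat \<Rightarrow> real^4" where "WQ r = (if r = 0 then mk4 1 0 0 0 else mk4 0 1 0 0)"
definition WK :: "nat \<Rightarrow> real^4" where "WK r = (if r = 0 then mk4 0 0 2 0 else mk4 0 0 0 1)"
definition WV :: "real^4^4" where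
  "WV = (\<chi> i. if i = 1 then mk4 1 0 0 0 else if i = 2 then mk4 0 1 0 0 else 0)"
definition UU :: "nat \<Rightarrow> real^4" where "UU k = mk4 (2 * real k) (- ((real k)^2)) 0 0"

lemma score_eq: "att_score 2 WQ WK x y = (x$1 * (2 * y$3) + x$2 * y$4) / sqrt 2"
  by (simp add: att_score_def numeral_2_eq_2 WQ_def WK_def inner4)

lemma main:
  assumes f: "\<forall>i<n. f i < n" and ist: "istar < n"
  shows "tf1_outputs n we (pe n) 2 WQ WK WV UU (fe_input n f istar) (f istar)"
proof -
  define xs where "xs = fe_input n f istar"
  define X where "X = (\<lambda>i. we (xs ! i) + pe n i)"
  have L: "length xs = 2*n+1" by (simp add: xs_def fe_input_def fe_len)
  have xq: "xs ! (2*n) = istar" by (simp add: xs_def fe_input_def nth_append fe_len)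
  have xo: "xs ! (2*i+1) = f i" if "i < n" for i
    using that by (simp add: xs_def fe_input_def nth_append fe_len fe_nth)
  define g where "g k = 2 * real istar * (if odd k then real (k div 2) else 0)
      + (if odd k then - ((real (k div 2))^2) else - (real n^2 + 1))" for k
  have sc: "att_score 2 WQ WK (X (2*n)) (X k) = g k / sqrt 2" for k
    by (simp add: score_eq X_def xq we_def pe_def g_def)
  have gt: "g k < g (2*istar+1)" if "k < 2*n+1" "k \<noteq> 2*istar+1" for k
  proof (cases "odd k")
    case True
    then obtain j where kj: "k = 2*j+1" by (metis oddE)
    then have "j \<noteq> istar" using that by auto
    then have "(real j - real istar)^2 > 0" by simp
    then show ?thesis using kj by (simp add: g_def power2_eq_square algebra_simps)
  next
    case False
    have a: "real istar * real istar \<ge> 0" "real n * real n \<ge> 0" by simp_all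
    have "g k = - (real n * real n + 1)" using False by (simp add: g_def power2_eq_square)
    moreover have "g (2*istar+1) = real istar * real istar" by (simp add: g_def power2_eq_square)
    ultimately show ?thesis using a by linarith
  qed
  have least: "(LEAST j. j < 2*n+1 \<and>
       (\<forall>k<2*n+1. att_score 2 WQ WK (X (2*n)) (X k) \<le> att_score 2 WQ WK (X (2*n)) (X j))) = 2*istar+1"
  proof (rule Least_equality)
    show "2*istar+1 < 2*n+1 \<and> (\<forall>k<2*n+1. att_score 2 WQ WK (X (2*n)) (X k) \<le> att_score 2 WQ WK (X (2*n)) (X (2*istar+1)))"
    proof (intro conjI allI impI)
      show "2*istar+1 < 2*n+1" using ist by simp
    next
      fix k assume k: "k < 2*n+1"
      have "g k \<le> g (2*istar+1)" using gt[OF k] by (cases "k = 2*istar+1") auto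
      then show "att_score 2 WQ WK (X (2*n)) (X k) \<le> att_score 2 WQ WK (X (2*n)) (X (2*istar+1))"
        by (simp add: sc divide_right_mono)
    qed
  next
    fix y assume y: "y < 2*n+1 \<and> (\<forall>k<2*n+1. att_score 2 WQ WK (X (2*n)) (X k) \<le> att_score 2 WQ WK (X (2*n)) (X y))"
    show "2*istar+1 \<le> y"
    proof (rule ccontr)
      assume "\<not> 2*istar+1 \<le> y"
      then have "g y < g (2*istar+1)" using gt y by auto
      moreover have "g (2*istar+1) \<le> g y" using y ist by (auto simp: sc divide_le_cancel)
      ultimately show False by simp
    qed
  qed
  have Xv: "X (2*istar+1) = mk4 (real (f istar)) 1 (real istar) (- ((real istar)^2))"
    using xo[OF ist] by (simp add: X_def we_def pe_def mk4_def vec_eq_iff)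
  define m where "m = f istar"
  have yv: "WV *v X (2*istar+1) = mk4 (real m) 1 0 0"
    unfolding Xv vec_eq_iff forall_4 by (simp add: mv4 WV_def m_def)
  have out: "UU k \<bullet> mk4 (real m) 1 0 0 < UU m \<bullet> mk4 (real m) 1 0 0" if "k \<noteq> m" for k
  proof -
    have "(real k - real m)^2 > 0" using that by simp
    then show ?thesis by (simp add: inner4 UU_def power2_eq_square algebra_simps)
  qed
  show ?thesis
    unfolding tf1_outputs_def Let_def xs_def[symmetric] L X_def[symmetric]
    using least yv out f ist by (simp add: hard_attn_layer_def m_def)
qed


lemma bnd: assumes "0 \<le> x" "x \<le> (real n + 1)^2" shows "x \<le> real 4 * (real n + 1) ^ 4"
proof -
  have N: "(1::real) \<le> real n + 1" by simp
  have "(real n + 1)^2 \<le> (real n + 1)^4" using N by (intro power_increasing) auto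
  also have "\<dots> \<le> 4 * (real n + 1)^4" by simp
  finally show ?thesis using assms by simp
qed

theorem theorem3:
  shows "\<exists>C::nat. \<forall>n::nat. n \<ge> 1 \<longrightarrow>
    (\<exists>(w::nat \<Rightarrow> real^4) (p::nat \<Rightarrow> real^4) (dh::nat) (WQ::nat \<Rightarrow> real^4) (WK::nat \<Rightarrow> real^4)
       (WV::real^4^4) (U::nat \<Rightarrow> real^4).
       let B = real C * (real n + 1) ^ C in
       1 \<le> dh \<and> real dh \<le> B \<and>
       (\<forall>x<n. int_vec_bounded B (w x)) \<and>
       (\<forall>i<2*n+1. int_vec_bounded B (p i)) \<and>
       (\<forall>r<dh. int_vec_bounded B (WQ r) \<and> int_vec_bounded B (WK r)) \<and>
       (\<forall>k. int_vec_bounded B (WV $ k)) \<and>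
       (\<forall>k<n. int_vec_bounded B (U k)) \<and>
       (\<forall>(f::nat \<Rightarrow> nat) (istar::nat). (\<forall>i<n. f i < n) \<longrightarrow> istar < n \<longrightarrow>
          tf1_outputs n w p dh WQ WK WV U (fe_input n f istar) (f istar)))"
proof (intro exI allI impI)
  fix n :: nat assume n1: "1 \<le> n"
  define B where "B = real 4 * (real n + 1) ^ 4"
  have sq: "real a ^ 2 \<le> (real n + 1)^2" if "a \<le> n" for a
    using that by (intro power_mono) auto
  have lin: "real a \<le> (real n + 1)^2" if "a \<le> n + 1" for a
  proof -
    have "real a \<le> real n + 1" using that by simp
    also have "\<dots> \<le> (real n + 1)^2" by (simp add: power2_eq_square)
    finally show ?thesis .
  qed
  have b_lin: "real a \<le> B" if "a \<le> n + 1" for a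
    unfolding B_def by (rule bnd) (use lin[OF that] in auto)
  have b_sq: "real a ^ 2 \<le> B" if "a \<le> n" for a
    unfolding B_def by (rule bnd) (use sq[OF that] in auto)
  have b_2: "2 * real a \<le> B" if "a \<le> n" for a
  proof -
    have "2 * real a \<le> 2 * real n" using that by simp
    moreover have "real n * real n \<ge> 0" by simp
    moreover have "(real n + 1)^2 = real n * real n + 2 * real n + 1" by (simp add: power2_eq_square algebra_simps)
    ultimately have "2 * real a \<le> (real n + 1)^2" by linarith
    then show ?thesis unfolding B_def by (intro bnd) auto
  qed
  have b_n2: "real n ^ 2 + 1 \<le> B"
  proof -
    have "real n ^ 2 + 1 \<le> (real n + 1)^2" by (simp add: power2_eq_square algebra_simps)
    then show ?thesis unfolding B_def by (intro bnd) auto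
  qed
  have b1: "1 \<le> B" using b_lin[of 1] by simp
  show "let B = real 4 * (real n + 1) ^ 4 in
       1 \<le> (2::nat) \<and> real 2 \<le> B \<and>
       (\<forall>x<n. int_vec_bounded B (we x)) \<and>
       (\<forall>i<2*n+1. int_vec_bounded B (pe n i)) \<and>
       (\<forall>r<(2::nat). int_vec_bounded B (WQ r) \<and> int_vec_bounded B (WK r)) \<and>
       (\<forall>k. int_vec_bounded B (WV $ k)) \<and>
       (\<forall>k<n. int_vec_bounded B (UU k)) \<and>
       (\<forall>(f::nat \<Rightarrow> nat) (istar::nat). (\<forall>i<n. f i < n) \<longrightarrow> istar < n \<longrightarrow>
          tf1_outputs n we (pe n) 2 WQ WK WV UU (fe_input n f istar) (f istar))"
    unfolding Let_def B_def[symmetric]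
  proof (intro conjI allI impI)
    show "real 2 \<le> B" using b_lin[of 2] n1 by simp
    show "int_vec_bounded B (we x)" if "x < n" for x
      using b_lin[of x] that b1 by (simp add: we_def ivb_mk4)
    show "int_vec_bounded B (pe n i)" if "i < 2*n+1" for i
    proof -
      have "i div 2 \<le> n" using that by simp
      moreover have "\<bar>- ((real n)^2) - 1\<bar> = (real n)^2 + 1"
        using zero_le_power2[of "real n"] by linarith
      ultimately show ?thesis using b_lin[of "i div 2"] b_sq[of "i div 2"] b_n2 b1
        by (simp add: pe_def ivb_mk4)
    qed
    show "int_vec_bounded B (WQ r)" for r using b1 by (simp add: WQ_def ivb_mk4)
    show "int_vec_bounded B (WK r)" for r using b_lin[of 2] n1 b1 by (simp add: WK_def ivb_mk4)
    show "int_vec_bounded B (WV $ k)" for k using b1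
      by (simp add: WV_def ivb_mk4, simp add: int_vec_bounded_def)
    show "int_vec_bounded B (UU k)" if "k < n" for k
      using b_2[of k] b_sq[of k] that b1 by (simp add: UU_def ivb_mk4)
    show "tf1_outputs n we (pe n) 2 WQ WK WV UU (fe_input n f istar) (f istar)"
      if "\<forall>i<n. f i < n" "istar < n" for f istar using main that by blast
  qed simp
qed

end
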